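(* Let $\eta>0$ and let $\mathbf x^*=(\mathbf u^*,\mathbf v^*,\mathbf t^* )$ be an optimal solution of $$\min_{(\mathbf u,\mathbf v,\mathbf t)\in\mathcal X}\ h_\eta(\mathbf u,\mathbf v,\mathbf t):=\frac{1}{4\eta}\sum_{i,j=1}^n t_{ij}^2+\tau\langle e^{-\mathbf u/\tau},\mathbf a\rangle+\tau\langle e^{-\mathbf v/\tau},\mathbf b\rangle,$$ where $\mathcal X=\{(\mathbf u,\mathbf v,\mathbf t):\mathbf u,\mathbf v\in\mathbb{R}^n,\mathbf t\in\mathbb{R}^{n\times n},t_{ij}\ge0,\ t_{ij}\ge u_i+v_j-C_{ij}\ \forall i,j\}$. Then $\mathbf x^*\in V_D$, where $D=\|C\|_\infty+\eta(\alpha+\beta)+\tau\log\big(\frac{\alpha+\beta}{2}\big)-\tau\min\{\log a_{min},\log b_{min}\}$ and $V_D=\{(\mathbf u,\mathbf v,\mathbf t):\ \tau\log\big(\frac{2a_i}{\alpha+\beta}\big)\le u_i\le D,\ \tau\log\big(\frac{2b_j}{\alpha+\beta}\big)\le v_j\le D\ \forall i,j\in[n]\}$.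
   Context: Let $n\ge1$, $C\in\mathbb{R}^{n\times n}$ with nonnegative entries and $\|C\|_\infty=\max_{i,j}|C_{ij}|$; $\mathbf a,\mathbf b\in\mathbb{R}^n$ with strictly positive entries, $\alpha=\sum_i a_i$, $\beta=\sum_i b_i$, $a_{min}=\min_i a_i$, $b_{min}=\min_i b_i$; $\tau>0$. $e^{-\mathbf u/\tau}$ denotes the entrywise exponential. *)

theory Defs
  imports Complex_Main
begin

text \<open>Index set [n] is modelled by a finite type 'n (n = CARD('n) \<ge> 1).
  Vectors are functions 'n \<Rightarrow> real, matrices 'n \<Rightarrow> 'n \<Rightarrow> real.\<close>

definition feasX :: "('n \<Rightarrow> 'n \<Rightarrow> real) \<Rightarrow> (('n \<Rightarrow> real) \<times> ('n \<Rightarrow> real) \<times> ('n \<Rightarrow> 'n \<Rightarrow> real)) set" where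
  "feasX C = {(u, v, t). \<forall>i j. t i j \<ge> 0 \<and> t i j \<ge> u i + v j - C i j}"

definition h_eta :: "real \<Rightarrow> real \<Rightarrow> ('n::finite \<Rightarrow> real) \<Rightarrow> ('n \<Rightarrow> real)
    \<Rightarrow> ('n \<Rightarrow> real) \<Rightarrow> ('n \<Rightarrow> real) \<Rightarrow> ('n \<Rightarrow> 'n \<Rightarrow> real) \<Rightarrow> real" where
  "h_eta \<eta> \<tau> a b u v t =
     1 / (4 * \<eta>) * (\<Sum>i\<in>UNIV. \<Sum>j\<in>UNIV. (t i j)\<^sup>2)
     + \<tau> * (\<Sum>i\<in>UNIV. exp (- u i / \<tau>) * a i)
     + \<tau> * (\<Sum>j\<in>UNIV. exp (- v j / \<tau>) * b j)"

definition norm_inf_mat :: "('n::finite \<Rightarrow> 'n \<Rightarrow> real) \<Rightarrow> real" where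
  "norm_inf_mat C = Max (range (\<lambda>(i, j). \<bar>C i j\<bar>))"

definition VD :: "real \<Rightarrow> real \<Rightarrow> ('n::finite \<Rightarrow> real) \<Rightarrow> ('n \<Rightarrow> real)
    \<Rightarrow> (('n \<Rightarrow> real) \<times> ('n \<Rightarrow> real) \<times> ('n \<Rightarrow> 'n \<Rightarrow> real)) set" where
  "VD \<tau> D a b = {(u, v, t).
     (\<forall>i. \<tau> * ln (2 * a i / (sum a UNIV + sum b UNIV)) \<le> u i \<and> u i \<le> D) \<and>
     (\<forall>j. \<tau> * ln (2 * b j / (sum a UNIV + sum b UNIV)) \<le> v j \<and> v j \<le> D)}"

end

theory Submission
  imports Defs
begin

lemma norm_inf_ge:
  fixes C :: "'n::finite \<Rightarrow> 'n \<Rightarrow> real"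
  shows "\<bar>C i j\<bar> \<le> norm_inf_mat C"
  unfolding norm_inf_mat_def
  by (rule Max_ge) (auto intro: image_eqI[where x="(i,j)"])

lemma key:
  fixes C :: "'n::finite \<Rightarrow> 'n \<Rightarrow> real"
    and a b :: "'n \<Rightarrow> real"
    and \<tau> \<eta> :: real
    and us vs :: "'n \<Rightarrow> real" and ts :: "'n \<Rightarrow> 'n \<Rightarrow> real"
  assumes C_nonneg: "\<And>i j. C i j \<ge> 0"
    and a_pos: "\<And>i. a i > 0" and b_pos: "\<And>i. b i > 0"
    and tau_pos: "\<tau> > 0" and eta_pos: "\<eta> > 0"
    and feas: "(us, vs, ts) \<in> feasX C"
    and opt: "\<And>u v t. (u, v, t) \<in> feasX C \<Longrightarrow> h_eta \<eta> \<tau> a b us vs ts \<le> h_eta \<eta> \<tau> a b u v t"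
  shows "(\<forall>i. \<tau> * ln (2 * a i / (sum a UNIV + sum b UNIV)) \<le> us i)
       \<and> (\<forall>j. \<tau> * ln (2 * b j / (sum a UNIV + sum b UNIV)) \<le> vs j)
       \<and> (\<forall>i. us i \<le> norm_inf_mat C + \<eta> * (sum a UNIV + sum b UNIV)
            + \<tau> * ln ((sum a UNIV + sum b UNIV) / 2)
            - \<tau> * min (ln (Min (range a))) (ln (Min (range b))))"
proof -
  define \<alpha> where "\<alpha> = sum a UNIV"
  define \<beta> where "\<beta> = sum b UNIV"
  define A where "A = (\<Sum>i\<in>UNIV. exp (- us i / \<tau>) * a i)"
  define B where "B = (\<Sum>j\<in>UNIV. exp (- vs j / \<tau>) * b j)"
  define Q where "Q = 1 / (4 * \<eta>) * (\<Sum>i\<in>UNIV. \<Sum>j\<in>UNIV. (ts i j)\<^sup>2)"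
  have fe: "\<And>i j. ts i j \<ge> 0 \<and> ts i j \<ge> us i + vs j - C i j" using feas by (auto simp: feasX_def)
  have h0: "h_eta \<eta> \<tau> a b us vs ts = Q + \<tau> * A + \<tau> * B"
    by (simp add: h_eta_def Q_def A_def B_def)
  have Qge: "Q \<ge> 0" using eta_pos by (simp add: Q_def sum_nonneg)
  have apos: "\<alpha> > 0" unfolding \<alpha>_def by (rule sum_pos) (auto simp: a_pos)
  have bpos: "\<beta> > 0" unfolding \<beta>_def by (rule sum_pos) (auto simp: b_pos)
  have Apos: "A > 0" unfolding A_def by (rule sum_pos) (auto simp: a_pos)
  have Bpos: "B > 0" unfolding B_def by (rule sum_pos) (auto simp: b_pos)
  have shift: "Q + \<tau> * A + \<tau> * B \<le> Q + \<tau> * (exp (-s) * A) + \<tau> * (exp s * B)" for s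
  proof -
    define c where "c = \<tau> * s"
    have "(\<lambda>i. us i + c, \<lambda>j. vs j - c, ts) \<in> feasX C" using fe by (auto simp: feasX_def)
    from opt[OF this] have "Q + \<tau> * A + \<tau> * B \<le> h_eta \<eta> \<tau> a b (\<lambda>i. us i + c) (\<lambda>j. vs j - c) ts"
      using h0 by simp
    also have "\<dots> = Q + \<tau> * (exp (-s) * A) + \<tau> * (exp s * B)"
    proof -
      have e1: "exp (- (us i + c) / \<tau>) = exp (-s) * exp (- us i / \<tau>)" for i
        using tau_pos by (simp add: c_def exp_add[symmetric] field_simps)
      have e2: "exp (- (vs i - c) / \<tau>) = exp s * exp (- vs i / \<tau>)" for i
        using tau_pos by (simp add: c_def exp_add[symmetric] field_simps)
      show ?thesis unfolding h_eta_def Q_def A_def B_def e1 e2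
        by (simp add: sum_distrib_left mult.assoc)
    qed
    finally show ?thesis .
  qed
  have AB: "A = B"
  proof -
    define p where "p = exp (ln A / 2)"
    define q where "q = exp (ln B / 2)"
    have pp: "p * p = A" using Apos by (simp add: p_def exp_add[symmetric])
    have qq: "q * q = B" using Bpos by (simp add: q_def exp_add[symmetric])
    have pq: "p > 0" "q > 0" by (auto simp: p_def q_def)
    have "exp (-(ln A / 2 - ln B / 2)) = q / p" unfolding p_def q_def by (simp only: minus_diff_eq exp_diff)
    moreover have "exp (ln A / 2 - ln B / 2) = p / q" unfolding p_def q_def by (rule exp_diff)
    ultimately have "Q + \<tau> * A + \<tau> * B \<le> Q + \<tau> * (q / p * A) + \<tau> * (p / q * B)"
      using shift[of "ln A / 2 - ln B / 2"] by simp
    also have "q / p * A = p * q" using pp pq by (simp add: field_simps)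
    also have "p / q * B = p * q" using qq pq by (simp add: field_simps)
    finally have "\<tau> * (A + B) \<le> \<tau> * (2 * (p * q))" by (simp add: algebra_simps)
    hence "A + B \<le> 2 * (p * q)" using tau_pos by simp
    hence "(p - q)^2 \<le> 0" using pp qq by (simp add: power2_eq_square algebra_simps)
    hence "p = q" by simp
    thus ?thesis using pp qq by simp
  qed
  have zero: "Q + \<tau> * A + \<tau> * B \<le> \<tau> * \<alpha> + \<tau> * \<beta>"
  proof -
    have "(\<lambda>_. 0, \<lambda>_. 0, \<lambda>_ _. 0) \<in> feasX C" using C_nonneg by (auto simp: feasX_def)
    from opt[OF this] h0 show ?thesis by (simp add: h_eta_def \<alpha>_def \<beta>_def)
  qed
  have A2: "2 * A \<le> \<alpha> + \<beta>" and B2: "2 * B \<le> \<alpha> + \<beta>"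
  proof -
    have "\<tau> * (2 * A) \<le> \<tau> * (\<alpha> + \<beta>)" using zero Qge AB by (simp add: algebra_simps)
    thus "2 * A \<le> \<alpha> + \<beta>" using tau_pos by simp
    thus "2 * B \<le> \<alpha> + \<beta>" using AB by simp
  qed
  have Ei: "exp (- us i / \<tau>) * a i \<le> A" for i
    unfolding A_def by (rule member_le_sum) (use a_pos in \<open>auto intro!: mult_nonneg_nonneg less_imp_le\<close>)
  have Ej: "exp (- vs j / \<tau>) * b j \<le> B" for j
    unfolding B_def by (rule member_le_sum) (use b_pos in \<open>auto intro!: mult_nonneg_nonneg less_imp_le\<close>)
  have lowgen: "\<tau> * ln (2 * c / (\<alpha> + \<beta>)) \<le> w" if "c > 0" "2 * (exp (- w / \<tau>) * c) \<le> \<alpha> + \<beta>" for c w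
  proof -
    have "2 * c / (\<alpha> + \<beta>) \<le> exp (w / \<tau>)"
      using that apos bpos by (simp add: field_simps exp_minus)
    hence "ln (2 * c / (\<alpha> + \<beta>)) \<le> w / \<tau>"
    proof -
      have "ln (2 * c / (\<alpha> + \<beta>)) \<le> ln (exp (w / \<tau>))"
        using that apos bpos \<open>2 * c / (\<alpha> + \<beta>) \<le> exp (w / \<tau>)\<close> by (subst ln_le_cancel_iff) auto
      thus ?thesis by simp
    qed
    thus ?thesis using tau_pos by (simp add: field_simps)
  qed
  have lowu: "\<tau> * ln (2 * a i / (\<alpha> + \<beta>)) \<le> us i" for i
    using lowgen[OF a_pos] Ei[of i] A2 by force
  have lowv: "\<tau> * ln (2 * b j / (\<alpha> + \<beta>)) \<le> vs j" for j
    using lowgen[OF b_pos] Ej[of j] B2 by force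
  define D where "D = norm_inf_mat C + \<eta> * (\<alpha> + \<beta>) + \<tau> * ln ((\<alpha> + \<beta>) / 2)
            - \<tau> * min (ln (Min (range a))) (ln (Min (range b)))"
  have up: "us i \<le> D" for i
  proof (rule ccontr)
    assume "\<not> us i \<le> D"
    hence uD: "us i > D" by simp
    define M where "M = \<eta> * (\<alpha> + \<beta>)"
    have Mpos: "M > 0" using eta_pos apos bpos by (simp add: M_def)
    have bigt: "ts i j > M" for j
    proof -
      have bmin: "Min (range b) \<le> b j" by (rule Min_le) auto
      have bminpos: "Min (range b) > 0" using b_pos by (subst Min_gr_iff) auto
      have "ln (Min (range b)) \<le> ln (b j)" using bmin bminpos by simp
      hence lnb: "min (ln (Min (range a))) (ln (Min (range b))) \<le> ln (b j)" by simp
      have "ln (2 * b j / (\<alpha> + \<beta>)) = ln (b j) - ln ((\<alpha> + \<beta>) / 2)"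
        using b_pos[of j] apos bpos by (simp add: ln_div ln_mult)
      hence "\<tau> * ln (2 * b j / (\<alpha> + \<beta>)) = \<tau> * ln (b j) - \<tau> * ln ((\<alpha> + \<beta>) / 2)"
        by (simp add: right_diff_distrib)
      hence "vs j \<ge> \<tau> * ln (b j) - \<tau> * ln ((\<alpha> + \<beta>) / 2)"
        using lowv[of j] by linarith
      moreover have "C i j \<le> norm_inf_mat C" using norm_inf_ge[of C i j] by simp
      moreover have "\<tau> * min (ln (Min (range a))) (ln (Min (range b))) \<le> \<tau> * ln (b j)"
        using lnb tau_pos by (simp add: mult_left_mono)
      ultimately show ?thesis using fe[of i j] uD unfolding D_def M_def by linarith
    qed
    define S where "S = (\<Sum>j\<in>UNIV. ts i j)"
    define E where "E = exp (- us i / \<tau>) * a i"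
    define n where "n = real (card (UNIV :: 'n set))"
    have E2: "2 * E \<le> \<alpha> + \<beta>" using Ei[of i] A2 by (simp add: E_def)
    have Epos: "E > 0" using a_pos by (simp add: E_def)
    obtain j0 :: 'n where True by simp
    have "S \<ge> ts i j0" unfolding S_def by (rule member_le_sum) (auto intro: fe[THEN conjunct1])
    hence SM: "S > M" using bigt[of j0] by simp
    define g where "g = S / (2 * \<eta>) - E"
    have gpos: "g > 0"
    proof -
      have "S / (2 * \<eta>) > M / (2 * \<eta>)" using SM eta_pos by (simp add: divide_strict_right_mono)
      also have "M / (2 * \<eta>) = (\<alpha> + \<beta>) / 2" using eta_pos by (simp add: M_def)
      finally show ?thesis using E2 by (simp add: g_def)
    qed
    define K where "K = n / (4 * \<eta>) + E / \<tau>"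
    have npos: "n > 0" by (simp add: n_def finite_UNIV_card_ge_0)
    have Kpos: "K > 0" using npos eta_pos Epos tau_pos unfolding K_def by (intro add_pos_pos divide_pos_pos) auto
    define \<delta> where "\<delta> = min (min M \<tau>) (g / (2 * K))"
    have dpos: "\<delta> > 0" using Mpos tau_pos gpos Kpos by (simp add: \<delta>_def)
    have dM: "\<delta> \<le> M" and dt: "\<delta> \<le> \<tau>" and dg: "\<delta> \<le> g / (2 * K)" by (auto simp: \<delta>_def)
    define u' where "u' = us(i := us i - \<delta>)"
    define t' where "t' = ts(i := (\<lambda>j. ts i j - \<delta>))"
    have "(u', vs, t') \<in> feasX C"
      using fe bigt dM unfolding feasX_def u'_def t'_def
      by (auto simp: less_imp_le) (smt (verit) fe bigt)+
    from opt[OF this] have opt': "h_eta \<eta> \<tau> a b us vs ts \<le> h_eta \<eta> \<tau> a b u' vs t'" .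
    have sq: "(\<Sum>k\<in>UNIV. \<Sum>j\<in>UNIV. (t' k j)\<^sup>2) = (\<Sum>k\<in>UNIV. \<Sum>j\<in>UNIV. (ts k j)\<^sup>2) + (n * \<delta>^2 - 2 * \<delta> * S)"
    proof -
      have "(\<Sum>j\<in>UNIV. (t' k j)\<^sup>2) = (\<Sum>j\<in>UNIV. (ts k j)\<^sup>2) + (if k = i then n * \<delta>^2 - 2 * \<delta> * S else 0)" for k
      proof (cases "k = i")
        case True
        have "(\<Sum>j\<in>UNIV. (ts i j - \<delta>)\<^sup>2) = (\<Sum>j\<in>UNIV. (ts i j)\<^sup>2 + (\<delta>^2 - 2 * \<delta> * ts i j))"
          by (rule sum.cong) (auto simp: power2_eq_square algebra_simps)
        also have "\<dots> = (\<Sum>j\<in>UNIV. (ts i j)\<^sup>2) + (n * \<delta>^2 - 2 * \<delta> * S)"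
          by (simp add: sum.distrib sum_subtractf sum_distrib_left S_def n_def)
        finally show ?thesis using True by (simp add: t'_def)
      qed (simp add: t'_def)
      thus ?thesis by (simp add: sum.distrib)
    qed
    have ex: "(\<Sum>k\<in>UNIV. exp (- u' k / \<tau>) * a k) = A + E * (exp (\<delta> / \<tau>) - 1)"
    proof -
      have "exp (- u' k / \<tau>) * a k = exp (- us k / \<tau>) * a k + (if k = i then E * (exp (\<delta> / \<tau>) - 1) else 0)" for k
      proof (cases "k = i")
        case True
        have "exp (- (us i - \<delta>) / \<tau>) = exp (- us i / \<tau>) * exp (\<delta> / \<tau>)"
          by (simp add: exp_add[symmetric] add_divide_distrib diff_divide_distrib)
        thus ?thesis using True by (simp add: u'_def E_def algebra_simps)
      qed (simp add: u'_def)
      thus ?thesis by (simp add: sum.distrib A_def)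
    qed
    have "h_eta \<eta> \<tau> a b u' vs t' = Q + 1 / (4 * \<eta>) * (n * \<delta>^2 - 2 * \<delta> * S) + \<tau> * (A + E * (exp (\<delta> / \<tau>) - 1)) + \<tau> * B"
      unfolding h_eta_def sq ex by (simp add: Q_def B_def algebra_simps)
    with opt' h0 have ineq: "0 \<le> 1 / (4 * \<eta>) * (n * \<delta>^2 - 2 * \<delta> * S) + \<tau> * (E * (exp (\<delta> / \<tau>) - 1))"
      by (simp add: algebra_simps)
    have "exp (\<delta> / \<tau>) \<le> 1 + \<delta> / \<tau> + (\<delta> / \<tau>)^2"
      by (rule exp_bound) (use dpos tau_pos dt in auto)
    hence "\<tau> * (E * (exp (\<delta> / \<tau>) - 1)) \<le> \<tau> * (E * (\<delta> / \<tau> + (\<delta> / \<tau>)^2))"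
      using tau_pos Epos by (intro mult_left_mono) auto
    also have "\<dots> = E * \<delta> + E / \<tau> * \<delta>^2" using tau_pos by (simp add: field_simps power2_eq_square)
    finally have "0 \<le> 1 / (4 * \<eta>) * (n * \<delta>^2 - 2 * \<delta> * S) + (E * \<delta> + E / \<tau> * \<delta>^2)"
      using ineq by linarith
    also have "1 / (4 * \<eta>) * (n * \<delta>^2 - 2 * \<delta> * S) + (E * \<delta> + E / \<tau> * \<delta>^2) = \<delta> * (\<delta> * K - g)"
      using eta_pos by (simp add: K_def g_def field_simps power2_eq_square)
    finally have "0 \<le> \<delta> * K - g" using dpos by (simp add: zero_le_mult_iff)
    moreover have "\<delta> * K \<le> g / 2" using dg Kpos by (simp add: field_simps)
    ultimately show False using gpos by simp
  qed
  show ?thesis using lowu lowv up unfolding D_def \<alpha>_def \<beta>_def by blast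
qed

theorem corollary1:
  fixes C :: "'n::finite \<Rightarrow> 'n \<Rightarrow> real"
    and a b :: "'n \<Rightarrow> real"
    and \<tau> \<eta> :: real
    and us vs :: "'n \<Rightarrow> real" and ts :: "'n \<Rightarrow> 'n \<Rightarrow> real"
  assumes C_nonneg: "\<And>i j. C i j \<ge> 0"
    and a_pos: "\<And>i. a i > 0" and b_pos: "\<And>i. b i > 0"
    and tau_pos: "\<tau> > 0" and eta_pos: "\<eta> > 0"
    and feas: "(us, vs, ts) \<in> feasX C"
    and opt: "\<And>u v t. (u, v, t) \<in> feasX C \<Longrightarrow> h_eta \<eta> \<tau> a b us vs ts \<le> h_eta \<eta> \<tau> a b u v t"
  shows "(us, vs, ts) \<in> VD \<tau>
           (norm_inf_mat C + \<eta> * (sum a UNIV + sum b UNIV)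
            + \<tau> * ln ((sum a UNIV + sum b UNIV) / 2)
            - \<tau> * min (ln (Min (range a))) (ln (Min (range b)))) a b"
proof -
  note K1 = key[OF assms]
  define C' where "C' = (\<lambda>i j. C j i)"
  define ts' where "ts' = (\<lambda>i j. ts j i)"
  have hsw: "h_eta \<eta> \<tau> b a v u (\<lambda>i j. t j i) = h_eta \<eta> \<tau> a b u v t" for u v t
    unfolding h_eta_def by (subst sum.swap) simp
  have fsw: "((v, u, \<lambda>i j. t j i) \<in> feasX C') = ((u, v, t) \<in> feasX C)" for u v t
    unfolding feasX_def C'_def by (auto simp: add.commute)
  have feas': "(vs, us, ts') \<in> feasX C'" using feas fsw ts'_def by simp
  have opt': "h_eta \<eta> \<tau> b a vs us ts' \<le> h_eta \<eta> \<tau> b a u v t" if "(u, v, t) \<in> feasX C'" for u v t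
  proof -
    have tt: "t = (\<lambda>i j. (\<lambda>i j. t j i) j i)" by simp
    have "(v, u, \<lambda>i j. t j i) \<in> feasX C" using that fsw[of u v "\<lambda>i j. t j i"] by simp
    from opt[OF this] show ?thesis
      using hsw[of vs us ts] hsw[of u v "\<lambda>i j. t j i"] by (simp add: ts'_def)
  qed
  have "C' i j \<ge> 0" for i j using C_nonneg by (simp add: C'_def)
  note K2 = key[OF this b_pos a_pos tau_pos eta_pos feas' opt']
  have nC: "norm_inf_mat C' = norm_inf_mat C"
  proof -
    have "range (\<lambda>(i, j). \<bar>C' i j\<bar>) = range (\<lambda>(i, j). \<bar>C i j\<bar>)"
      by (auto simp: C'_def image_iff)
    thus ?thesis by (simp add: norm_inf_mat_def)
  qed
  show ?thesis using K1 K2 unfolding VD_def nC by (auto simp: add.commute min.commute)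
qed

end
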